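(* Let $X$ be a complex separable Hilbert space, $A\in\mathcal B(X)$ self-adjoint, and $\mathcal G\subset X$ countable. Then $\{e^{tA}g\}_{g\in\mathcal G,\,t\in[0,1)}$ is a semi-continuous frame for $X$ if and only if $\{e^{tA}g\}_{g\in\mathcal G,\,t\in[0,\tau)}$ is a semi-continuous frame for $X$ for every $\tau\in(0,\infty)$.
   Context: $e^{tA}=\sum_{n\ge0}(tA)^n/n!$. The family $\{e^{tA}g\}_{g\in\mathcal G,t\in[0,\tau)}$ is a semi-continuous frame if there are $c_1,c_2>0$ with $c_1\|x\|^2\le\sum_{g\in\mathcal G}\int_0^\tau|\langle x,e^{tA}g\rangle|^2dt\le c_2\|x\|^2$ for all $x\in X$. *)

theory Defs
  imports "HOL-Analysis.Analysis"
begin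

text \<open>The library has no complex inner product spaces, so we introduce them
  as a type class: a real normed vector space with a complex scalar
  multiplication and a complex inner product (antilinear in the first
  argument, linear in the second) inducing the norm.\<close>

class complex_inner = real_normed_vector +
  fixes scaleC :: "complex \<Rightarrow> 'a \<Rightarrow> 'a"
    and cinner :: "'a \<Rightarrow> 'a \<Rightarrow> complex"
  assumes scaleC_of_real: "scaleC (of_real r) x = r *\<^sub>R x"
    and scaleC_add_right: "scaleC a (x + y) = scaleC a x + scaleC a y"
    and scaleC_add_left: "scaleC (a + b) x = scaleC a x + scaleC b x"
    and scaleC_scaleC: "scaleC a (scaleC b x) = scaleC (a * b) x"
    and scaleC_one: "scaleC 1 x = x"
    and cinner_commute: "cinner x y = cnj (cinner y x)"
    and cinner_add_right: "cinner x (y + z) = cinner x y + cinner x z"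
    and cinner_scaleC_right: "cinner x (scaleC a y) = a * cinner x y"
    and cinner_nonneg: "cinner x x = complex_of_real (Re (cinner x x)) \<and> 0 \<le> Re (cinner x x)"
    and cinner_eq_zero: "cinner x x = 0 \<longleftrightarrow> x = 0"
    and norm_cinner: "norm x = sqrt (Re (cinner x x))"

definition separable_type :: "'a::topological_space itself \<Rightarrow> bool" where
  "separable_type _ \<longleftrightarrow> (\<exists>D::'a set. countable D \<and> closure D = UNIV)"

definition bounded_clinear_op :: "('a::complex_inner \<Rightarrow> 'a) \<Rightarrow> bool" where
  "bounded_clinear_op A \<longleftrightarrow> bounded_linear A \<and> (\<forall>c x. A (scaleC c x) = scaleC c (A x))"

definition selfadjoint_op :: "('a::complex_inner \<Rightarrow> 'a) \<Rightarrow> bool" where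
  "selfadjoint_op A \<longleftrightarrow> (\<forall>x y. cinner (A x) y = cinner x (A y))"

definition exp_op :: "('a::complex_inner \<Rightarrow> 'a) \<Rightarrow> real \<Rightarrow> 'a \<Rightarrow> 'a" where
  "exp_op A t g = (\<Sum>n. (t ^ n / fact n) *\<^sub>R (A ^^ n) g)"

definition semicont_frame_sum :: "('a::complex_inner \<Rightarrow> 'a) \<Rightarrow> 'a set \<Rightarrow> real \<Rightarrow> 'a \<Rightarrow> ennreal" where
  "semicont_frame_sum A G \<tau> x =
     (\<Sum>\<^sub>\<infinity> g\<in>G. \<integral>\<^sup>+ t. indicator {0..<\<tau>} t * ennreal ((cmod (cinner x (exp_op A t g)))\<^sup>2) \<partial>lborel)"

definition semicont_frame :: "('a::complex_inner \<Rightarrow> 'a) \<Rightarrow> 'a set \<Rightarrow> real \<Rightarrow> bool" where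
  "semicont_frame A G \<tau> \<longleftrightarrow>
     (\<exists>c1 c2. c1 > 0 \<and> c2 > 0 \<and>
        (\<forall>x. ennreal (c1 * (norm x)\<^sup>2) \<le> semicont_frame_sum A G \<tau> x \<and>
             semicont_frame_sum A G \<tau> x \<le> ennreal (c2 * (norm x)\<^sup>2)))"

end

theory Submission
  imports Defs
begin


lemma cinner_zero_right[simp]: "cinner x (0::'a::complex_inner) = 0"
  using cinner_add_right[of x 0 0] by simp

lemma cinner_add_left: "cinner (x + y) (z::'a::complex_inner) = cinner x z + cinner y z"
  by (metis cinner_add_right cinner_commute complex_cnj_add)

lemma cinner_zero_left[simp]: "cinner 0 (x::'a::complex_inner) = 0"
  by (metis cinner_commute cinner_zero_right complex_cnj_zero)

lemma cinner_scaleR_right: "cinner x (r *\<^sub>R (y::'a::complex_inner)) = of_real r * cinner x y"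
  by (metis cinner_scaleC_right scaleC_of_real)

lemma cinner_scaleR_left: "cinner (r *\<^sub>R (x::'a::complex_inner)) y = of_real r * cinner x y"
  by (metis cinner_commute cinner_scaleR_right complex_cnj_complex_of_real complex_cnj_mult)

lemma cinner_scaleC_left: "cinner (scaleC c (x::'a::complex_inner)) y = cnj c * cinner x y"
  by (metis cinner_commute cinner_scaleC_right complex_cnj_mult)

lemma cinner_minus_left: "cinner (- x) (y::'a::complex_inner) = - cinner x y"
  using cinner_scaleR_left[of "-1" x y] by simp

lemma cinner_minus_right: "cinner x (- y::'a::complex_inner) = - cinner x y"
  using cinner_scaleR_right[of x "-1" y] by simp

lemma cinner_diff_left: "cinner (x - y) (z::'a::complex_inner) = cinner x z - cinner y z"
  using cinner_add_left[of x "-y" z] by (simp add: cinner_minus_left)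

lemma cinner_diff_right: "cinner z (x - y::'a::complex_inner) = cinner z x - cinner z y"
  using cinner_add_right[of z x "-y"] by (simp add: cinner_minus_right)

lemma cinner_self_Re: "cinner x (x::'a::complex_inner) = of_real ((norm x)^2)"
  by (metis cinner_nonneg norm_cinner real_sqrt_pow2)

lemma cinner_sum_left: "cinner (\<Sum>i\<in>I. f i) (y::'a::complex_inner) = (\<Sum>i\<in>I. cinner (f i) y)"
  by (induction I rule: infinite_finite_induct) (auto simp: cinner_add_left)

lemma real_CS: "Re (cinner x y) \<le> norm x * norm (y::'a::complex_inner)"
proof (cases "y = 0")
  case True then show ?thesis by simp
next
  case False
  define r where "r = - Re (cinner x y) / (norm y)^2"
  have ny: "norm y > 0" using False by simp
  have eq: "cinner (x + r *\<^sub>R y) (x + r *\<^sub>R y) = cinner x x + of_real r * cinner x y + of_real r * cinner y x + of_real r * of_real r * cinner y y"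
    by (simp add: cinner_add_left cinner_add_right cinner_scaleR_left cinner_scaleR_right algebra_simps)
  have "0 \<le> (norm (x + r *\<^sub>R y))^2" by simp
  also have "\<dots> = Re (cinner (x + r *\<^sub>R y) (x + r *\<^sub>R y))" by (simp add: cinner_self_Re)
  finally have "0 \<le> Re (cinner x x + of_real r * cinner x y + of_real r * cinner y x + of_real r * of_real r * cinner y y)"
    using eq by simp
  moreover have "Re (cinner y x) = Re (cinner x y)" by (metis cinner_commute complex_cnj_cnj cnj.simps(1))
  ultimately have "0 \<le> (norm x)^2 + 2 * r * Re (cinner x y) + r * r * (norm y)^2"
    by (simp add: cinner_self_Re)
  also have "\<dots> = (norm x)^2 - (Re (cinner x y))^2 / (norm y)^2"
    using ny by (simp add: r_def field_simps power2_eq_square)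
  finally have "(Re (cinner x y))^2 \<le> (norm x * norm y)^2"
    using ny by (simp add: field_simps power_mult_distrib)
  then show ?thesis
    by (rule power2_le_imp_le) simp
qed

lemma norm_scaleC_unit: "cmod c = 1 \<Longrightarrow> norm (scaleC c (y::'a::complex_inner)) = norm y"
  by (simp add: norm_cinner cinner_scaleC_left cinner_scaleC_right mult.assoc[symmetric] complex_norm_square[symmetric])

lemma cinner_CS: "cmod (cinner x y) \<le> norm x * norm (y::'a::complex_inner)"
proof (cases "cinner x y = 0")
  case True then show ?thesis by simp
next
  case False
  define c where "c = cnj (cinner x y) / of_real (cmod (cinner x y))"
  have c1: "cmod c = 1" using False by (simp add: c_def norm_divide)
  define z where "z = cinner x y"
  have zn: "cmod z \<noteq> 0" using False z_def by simp
  have "cinner x (scaleC c y) = (cnj z * z) / of_real (cmod z)"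
    by (simp add: c_def z_def cinner_scaleC_right)
  also have "cnj z * z = of_real ((cmod z)^2)" by (simp only: complex_norm_square mult.commute)
  also have "of_real ((cmod z)^2) / of_real (cmod z) = (of_real (cmod z) :: complex)"
    using zn by (simp add: power2_eq_square)
  finally have "cinner x (scaleC c y) = of_real (cmod (cinner x y))" by (simp add: z_def)
  then have "cmod (cinner x y) = Re (cinner x (scaleC c y))" by simp
  also have "\<dots> \<le> norm x * norm (scaleC c y)" by (rule real_CS)
  finally show ?thesis using c1 by (simp add: norm_scaleC_unit)
qed

lemma bounded_linear_cinner_right: "bounded_linear (\<lambda>y. cinner x (y::'a::complex_inner))"
proof (rule bounded_linear_intro[where K="norm x"])
  show "cinner x (y + z) = cinner x y + cinner x z" for y z by (rule cinner_add_right)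
  show "cinner x (r *\<^sub>R y) = r *\<^sub>R cinner x y" for r y by (simp add: cinner_scaleR_right scaleR_conv_of_real)
  show "norm (cinner x y) \<le> norm y * norm x" for y using cinner_CS[of x y] by (simp add: mult.commute)
qed


lemma summable_norm_cancel':
  fixes f :: "nat \<Rightarrow> 'a::{real_normed_vector,complete_space}"
  assumes s: "summable (\<lambda>n. norm (f n))"
  shows "summable f"
proof -
  let ?X = "\<lambda>n. \<Sum>i<n. f i"
  let ?Y = "\<lambda>n. \<Sum>i<n. norm (f i)"
  have CY: "Cauchy ?Y" using s by (simp add: summable_iff_convergent convergent_Cauchy)
  have key: "norm (?X m - ?X n) \<le> \<bar>?Y m - ?Y n\<bar>" if "n \<le> m" for m n
  proof -
    have "?X m - ?X n = (\<Sum>i\<in>{n..<m}. f i)"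
      using that by (metis sum_diff_nat_ivl lessThan_atLeast0 zero_le)
    moreover have "?Y m - ?Y n = (\<Sum>i\<in>{n..<m}. norm (f i))"
      using that by (metis sum_diff_nat_ivl lessThan_atLeast0 zero_le)
    ultimately show ?thesis by (metis norm_sum abs_ge_self order_trans)
  qed
  have key2: "norm (?X m - ?X n) \<le> \<bar>?Y m - ?Y n\<bar>" for m n
  proof (cases "n \<le> m")
    case True then show ?thesis by (rule key)
  next
    case False
    then have "norm (?X n - ?X m) \<le> \<bar>?Y n - ?Y m\<bar>" by (intro key) simp
    then show ?thesis by (simp add: norm_minus_commute abs_minus_commute)
  qed
  have "Cauchy ?X"
  proof (rule metric_CauchyI)
    fix e :: real assume "0 < e"
    then obtain M where M: "\<forall>m\<ge>M. \<forall>n\<ge>M. dist (?Y m) (?Y n) < e"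
      using CY metric_CauchyD by blast
    show "\<exists>M. \<forall>m\<ge>M. \<forall>n\<ge>M. dist (?X m) (?X n) < e"
    proof (intro exI allI impI)
      fix m n assume "M \<le> m" "M \<le> n"
      then have "dist (?Y m) (?Y n) < e" using M by blast
      then show "dist (?X m) (?X n) < e" using key2[of m n] by (simp add: dist_norm)
    qed
  qed
  then show ?thesis by (simp add: summable_iff_convergent Cauchy_convergent)
qed

lemma summable_norm':
  fixes f :: "nat \<Rightarrow> 'a::{real_normed_vector,complete_space}"
  assumes s: "summable (\<lambda>n. norm (f n))"
  shows "norm (suminf f) \<le> (\<Sum>n. norm (f n))"
proof (rule LIMSEQ_le)
  show "(\<lambda>n. norm (\<Sum>i<n. f i)) \<longlonglongrightarrow> norm (suminf f)"
    by (intro tendsto_norm summable_LIMSEQ summable_norm_cancel'[OF s])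
  show "(\<lambda>n. \<Sum>i<n. norm (f i)) \<longlonglongrightarrow> (\<Sum>n. norm (f n))"
    by (intro summable_LIMSEQ s)
  show "\<exists>N. \<forall>n\<ge>N. norm (\<Sum>i<n. f i) \<le> (\<Sum>i<n. norm (f i))"
    by (auto intro: norm_sum)
qed

lemma summable_comparison_test'':
  fixes f :: "nat \<Rightarrow> 'a::{real_normed_vector,complete_space}"
  shows "summable g \<Longrightarrow> (\<And>n. norm (f n) \<le> g n) \<Longrightarrow> summable f"
proof -
  assume g: "summable g" and le: "\<And>n. norm (f n) \<le> g n"
  have "summable (\<lambda>n. norm (f n))"
    by (rule summable_comparison_test'[where N=0, OF g]) (simp add: le)
  then show "summable f" by (rule summable_norm_cancel')
qed

lemma Cauchy_product_sums_bil:
  fixes a :: "nat \<Rightarrow> 'a::real_normed_vector" and b :: "nat \<Rightarrow> 'b::real_normed_vector"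
  assumes bb: "bounded_bilinear pr"
  assumes sa: "summable a" and sb: "summable b"
  assumes a: "summable (\<lambda>k. norm (a k))"
    and b: "summable (\<lambda>k. norm (b k))"
  shows "(\<lambda>k. \<Sum>i\<le>k. pr (a i) (b (k - i))) sums (pr (\<Sum>k. a k) (\<Sum>k. b k) :: 'c::real_normed_vector)"
proof -
  interpret bounded_bilinear pr by (rule bb)
  obtain K where K: "K > 0" "\<And>x y. norm (pr x y) \<le> norm x * norm y * K" using pos_bounded by blast
  let ?S1 = "\<lambda>n::nat. {..<n} \<times> {..<n}"
  let ?S2 = "\<lambda>n::nat. {(i,j). i + j < n}"
  have S1_mono: "\<And>m n. m \<le> n \<Longrightarrow> ?S1 m \<subseteq> ?S1 n" by auto
  have S2_le_S1: "\<And>n. ?S2 n \<subseteq> ?S1 n" by auto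
  have S1_le_S2: "\<And>n. ?S1 (n div 2) \<subseteq> ?S2 n" by auto
  have finite_S1: "\<And>n. finite (?S1 n)" by simp
  with S2_le_S1 have finite_S2: "\<And>n. finite (?S2 n)" by (rule finite_subset)
  let ?g = "\<lambda>(i,j). pr (a i) (b j)"
  let ?f = "\<lambda>(i,j). norm (a i) * norm (b j)"
  have f_nonneg: "\<And>x. 0 \<le> ?f x" by auto
  then have norm_sum_f: "\<And>A. norm (sum ?f A) = sum ?f A"
    unfolding real_norm_def
    by (simp only: abs_of_nonneg sum_nonneg [rule_format])
  have prodsum: "\<And>n. pr (\<Sum>k<n. a k) (\<Sum>k<n. b k) = sum ?g (?S1 n)"
    unfolding sum_left unfolding sum_right by (simp add: sum.cartesian_product)
  have "(\<lambda>n. pr (\<Sum>k<n. a k) (\<Sum>k<n. b k)) \<longlonglongrightarrow> pr (\<Sum>k. a k) (\<Sum>k. b k)"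
    by (intro tendsto summable_LIMSEQ sa sb)
  then have 1: "(\<lambda>n. sum ?g (?S1 n)) \<longlonglongrightarrow> pr (\<Sum>k. a k) (\<Sum>k. b k)"
    by (simp only: prodsum)
  have "(\<lambda>n. (\<Sum>k<n. norm (a k)) * (\<Sum>k<n. norm (b k))) \<longlonglongrightarrow> (\<Sum>k. norm (a k)) * (\<Sum>k. norm (b k))"
    using a b by (intro tendsto_mult summable_LIMSEQ)
  then have "(\<lambda>n. sum ?f (?S1 n)) \<longlonglongrightarrow> (\<Sum>k. norm (a k)) * (\<Sum>k. norm (b k))"
    by (simp only: sum_product sum.Sigma [rule_format] finite_lessThan)
  then have "convergent (\<lambda>n. sum ?f (?S1 n))"
    by (rule convergentI)
  then have Cauchy: "Cauchy (\<lambda>n. sum ?f (?S1 n))"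
    by (rule convergent_Cauchy)
  have "Zfun (\<lambda>n. sum ?f (?S1 n - ?S2 n)) sequentially"
  proof (rule ZfunI, simp only: eventually_sequentially norm_sum_f)
    fix r :: real
    assume r: "0 < r"
    from CauchyD [OF Cauchy r] obtain N
      where "\<forall>m\<ge>N. \<forall>n\<ge>N. norm (sum ?f (?S1 m) - sum ?f (?S1 n)) < r" ..
    then have "\<And>m n. N \<le> n \<Longrightarrow> n \<le> m \<Longrightarrow> norm (sum ?f (?S1 m - ?S1 n)) < r"
      by (simp only: sum_diff finite_S1 S1_mono)
    then have N: "\<And>m n. N \<le> n \<Longrightarrow> n \<le> m \<Longrightarrow> sum ?f (?S1 m - ?S1 n) < r"
      by (simp only: norm_sum_f)
    show "\<exists>N. \<forall>n\<ge>N. sum ?f (?S1 n - ?S2 n) < r"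
    proof (intro exI allI impI)
      fix n
      assume "2 * N \<le> n"
      then have n: "N \<le> n div 2" by simp
      have "sum ?f (?S1 n - ?S2 n) \<le> sum ?f (?S1 n - ?S1 (n div 2))"
        by (intro sum_mono2 finite_Diff finite_S1 f_nonneg Diff_mono subset_refl S1_le_S2)
      also have "\<dots> < r"
        using n div_le_dividend by (rule N)
      finally show "sum ?f (?S1 n - ?S2 n) < r" .
    qed
  qed
  then have "Zfun (\<lambda>n. sum ?g (?S1 n - ?S2 n)) sequentially"
  proof (rule Zfun_imp_Zfun[where K=K])
    show "\<forall>\<^sub>F n in sequentially. norm (sum ?g (?S1 n - ?S2 n)) \<le> norm (sum ?f (?S1 n - ?S2 n)) * K"
    proof (intro always_eventually allI)
      fix n
      have "norm (sum ?g (?S1 n - ?S2 n)) \<le> (\<Sum>x\<in>?S1 n - ?S2 n. norm (?g x))" by (rule norm_sum)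
      also have "\<dots> \<le> (\<Sum>x\<in>?S1 n - ?S2 n. ?f x * K)"
        by (rule sum_mono) (auto simp: K)
      also have "\<dots> = norm (sum ?f (?S1 n - ?S2 n)) * K"
        by (simp only: norm_sum_f sum_distrib_right)
      finally show "norm (sum ?g (?S1 n - ?S2 n)) \<le> norm (sum ?f (?S1 n - ?S2 n)) * K" .
    qed
  qed
  then have 2: "(\<lambda>n. sum ?g (?S1 n) - sum ?g (?S2 n)) \<longlonglongrightarrow> 0"
    unfolding tendsto_Zfun_iff diff_0_right
    by (simp only: sum_diff finite_S1 S2_le_S1)
  with 1 have "(\<lambda>n. sum ?g (?S2 n)) \<longlonglongrightarrow> pr (\<Sum>k. a k) (\<Sum>k. b k)"
    by (rule Lim_transform2)
  then show ?thesis
    by (simp only: sums_def sum.triangle_reindex)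
qed


lemma exp_real_sums: "(\<lambda>n. x ^ n / fact n) sums exp (x::real)"
  using exp_converges[of x] by (simp add: divide_inverse mult.commute)

context
  fixes A :: "'a::{complex_inner,complete_space} \<Rightarrow> 'a"
  assumes blA: "bounded_linear A"
begin

definition "aa = onorm A"

lemma aa_nonneg: "0 \<le> aa" unfolding aa_def by (rule onorm_pos_le[OF blA])

lemma bl_pow: "bounded_linear (A ^^ n)"
  by (induction n) (auto intro: bounded_linear_compose[OF blA] bounded_linear_ident simp: id_def)

lemma norm_pow: "norm ((A ^^ n) y) \<le> aa ^ n * norm y"
proof (induction n arbitrary: y)
  case 0 then show ?case by simp
next
  case (Suc n)
  have "norm ((A ^^ Suc n) y) = norm (A ((A ^^ n) y))" by simp
  also have "\<dots> \<le> aa * norm ((A ^^ n) y)" unfolding aa_def by (rule onorm[OF blA])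
  also have "\<dots> \<le> aa * (aa ^ n * norm y)" by (rule mult_left_mono[OF Suc aa_nonneg])
  finally show ?case by (simp add: mult.assoc)
qed

lemma onorm_pow: "onorm (A ^^ n) \<le> aa ^ n"
  by (rule onorm_bound) (auto simp: norm_pow aa_nonneg)


lemma term_norm_le: "norm ((t ^ n / fact n) *\<^sub>R (A ^^ n) y) \<le> (\<bar>t\<bar> * aa) ^ n / fact n * norm y"
proof -
  have "norm ((t ^ n / fact n) *\<^sub>R (A ^^ n) y) = \<bar>t\<bar> ^ n / fact n * norm ((A ^^ n) y)"
    by (simp add: power_abs)
  also have "\<dots> \<le> \<bar>t\<bar> ^ n / fact n * (aa ^ n * norm y)"
    by (rule mult_left_mono[OF norm_pow]) simp
  finally show ?thesis by (simp add: power_mult_distrib)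
qed

lemma summable_term_norm: "summable (\<lambda>n. norm ((t ^ n / fact n) *\<^sub>R (A ^^ n) y))"
proof (rule summable_comparison_test)
  show "\<exists>N. \<forall>n\<ge>N. norm (norm ((t ^ n / fact n) *\<^sub>R (A ^^ n) y)) \<le> (\<bar>t\<bar> * aa) ^ n / fact n * norm y"
    using term_norm_le by simp
  show "summable (\<lambda>n. (\<bar>t\<bar> * aa) ^ n / fact n * norm y)"
    by (intro summable_mult2 sums_summable[OF exp_real_sums])
qed

lemma summable_term: "summable (\<lambda>n. (t ^ n / fact n) *\<^sub>R (A ^^ n) y)"
  by (rule summable_norm_cancel'[OF summable_term_norm])

lemma exp_op_sums: "(\<lambda>n. (t ^ n / fact n) *\<^sub>R (A ^^ n) y) sums exp_op A t y"
  unfolding exp_op_def by (rule summable_sums[OF summable_term])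

lemma exp_op_norm: "norm (exp_op A t y) \<le> exp (\<bar>t\<bar> * aa) * norm y"
proof -
  have "norm (exp_op A t y) \<le> (\<Sum>n. norm ((t ^ n / fact n) *\<^sub>R (A ^^ n) y))"
    unfolding exp_op_def by (rule summable_norm'[OF summable_term_norm])
  also have "\<dots> \<le> (\<Sum>n. (\<bar>t\<bar> * aa) ^ n / fact n * norm y)"
    by (intro suminf_le summable_term_norm term_norm_le summable_mult2 sums_summable[OF exp_real_sums])
  also have "\<dots> = exp (\<bar>t\<bar> * aa) * norm y"
    using sums_unique[OF sums_mult2[OF exp_real_sums[of "\<bar>t\<bar> * aa"], of "norm y"]] by simp
  finally show ?thesis .
qed

lemma exp_op_add: "exp_op A t (y + z) = exp_op A t y + exp_op A t z"
proof -
  have "(\<lambda>n. (t ^ n / fact n) *\<^sub>R (A ^^ n) y + (t ^ n / fact n) *\<^sub>R (A ^^ n) z) sums (exp_op A t y + exp_op A t z)"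
    by (intro sums_add exp_op_sums)
  moreover have "(\<lambda>n. (t ^ n / fact n) *\<^sub>R (A ^^ n) y + (t ^ n / fact n) *\<^sub>R (A ^^ n) z) = (\<lambda>n. (t ^ n / fact n) *\<^sub>R (A ^^ n) (y + z))"
    by (simp add: linear_add[OF bounded_linear.linear[OF bl_pow]] scaleR_add_right)
  ultimately show ?thesis using exp_op_sums sums_unique2 by metis
qed

lemma exp_op_scaleR: "exp_op A t (r *\<^sub>R y) = r *\<^sub>R exp_op A t y"
proof -
  have "(\<lambda>n. r *\<^sub>R ((t ^ n / fact n) *\<^sub>R (A ^^ n) y)) sums (r *\<^sub>R exp_op A t y)"
    by (intro sums_scaleR_right exp_op_sums)
  moreover have "(\<lambda>n. r *\<^sub>R ((t ^ n / fact n) *\<^sub>R (A ^^ n) y)) = (\<lambda>n. (t ^ n / fact n) *\<^sub>R (A ^^ n) (r *\<^sub>R y))"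
    by (rule ext) (simp add: linear_scale[OF bounded_linear.linear[OF bl_pow]] algebra_simps)
  ultimately show ?thesis using exp_op_sums sums_unique2 by metis
qed

lemma bl_exp_op: "bounded_linear (exp_op A t)"
proof (rule bounded_linear_intro[where K="exp (\<bar>t\<bar> * aa)"])
  show "exp_op A t (x + y) = exp_op A t x + exp_op A t y" for x y by (rule exp_op_add)
  show "exp_op A t (r *\<^sub>R x) = r *\<^sub>R exp_op A t x" for r x by (rule exp_op_scaleR)
  show "norm (exp_op A t x) \<le> norm x * exp (\<bar>t\<bar> * aa)" for x
    using exp_op_norm[of t x] by (simp add: mult.commute)
qed

lemma exp_op_0: "exp_op A 0 y = y"
proof -
  have "(\<lambda>n. ((0::real) ^ n / fact n) *\<^sub>R (A ^^ n) y) sums y"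
  proof -
    have "(\<lambda>n. ((0::real) ^ n / fact n) *\<^sub>R (A ^^ n) y) = (\<lambda>n. if n = 0 then y else 0)"
      by (auto simp: power_0_left)
    then show ?thesis using sums_single[of 0 "\<lambda>_. y"] by simp
  qed
  then show ?thesis using exp_op_sums sums_unique2 by metis
qed

end


context
  fixes A :: "'a::{complex_inner,complete_space} \<Rightarrow> 'a"
  assumes blA: "bounded_linear A"
begin

abbreviation "tm t n y \<equiv> (t ^ n / fact n) *\<^sub>R (A ^^ n) y"

lemma Bl_apply: "blinfun_apply (Blinfun (A ^^ n)) = A ^^ n"
  by (rule bounded_linear_Blinfun_apply[OF bl_pow[OF blA]])

lemma norm_a: "norm ((s ^ m / fact m) *\<^sub>R Blinfun (A ^^ m)) \<le> (\<bar>s\<bar> * aa A) ^ m / fact m"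
proof (rule norm_blinfun_bound)
  show "0 \<le> (\<bar>s\<bar> * aa A) ^ m / fact m" using aa_nonneg[OF blA] by simp
  fix w
  have "norm (blinfun_apply ((s ^ m / fact m) *\<^sub>R Blinfun (A ^^ m)) w) = norm (tm s m w)"
    by (simp add: Bl_apply blinfun.scaleR_left)
  also have "\<dots> \<le> (\<bar>s\<bar> * aa A) ^ m / fact m * norm w" by (rule term_norm_le[OF blA])
  finally show "norm (blinfun_apply ((s ^ m / fact m) *\<^sub>R Blinfun (A ^^ m)) w) \<le> (\<bar>s\<bar> * aa A) ^ m / fact m * norm w" .
qed

lemma a_sums: "(\<lambda>m. (s ^ m / fact m) *\<^sub>R Blinfun (A ^^ m)) sums Blinfun (exp_op A s)"
proof -
  let ?a = "\<lambda>m. (s ^ m / fact m) *\<^sub>R Blinfun (A ^^ m)"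
  let ?L = "Blinfun (exp_op A s)"
  let ?x = "\<bar>s\<bar> * aa A"
  define T where "T M = (\<Sum>n. ?x ^ (n + M) / fact (n + M))" for M
  have Ts: "(\<lambda>n. ?x ^ (n + M) / fact (n + M)) sums (exp ?x - (\<Sum>i<M. ?x ^ i / fact i))" for M
    by (rule sums_split_initial_segment[OF exp_real_sums])
  have T_eq: "T M = exp ?x - (\<Sum>i<M. ?x ^ i / fact i)" for M
    unfolding T_def by (rule sums_unique[OF Ts, symmetric])
  have T0: "T \<longlonglongrightarrow> 0"
  proof -
    have "(\<lambda>M. exp ?x - (\<Sum>i<M. ?x ^ i / fact i)) \<longlonglongrightarrow> exp ?x - exp ?x"
      by (intro tendsto_diff tendsto_const exp_real_sums[unfolded sums_def])
    moreover have "T = (\<lambda>M. exp ?x - (\<Sum>i<M. ?x ^ i / fact i))" using T_eq by (intro ext)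
    ultimately show ?thesis by simp
  qed
  have Lapp: "blinfun_apply ?L = exp_op A s" by (rule bounded_linear_Blinfun_apply[OF bl_exp_op[OF blA]])
  have bound: "norm ((\<Sum>m<M. ?a m) - ?L) \<le> T M" for M
  proof (rule norm_blinfun_bound)
    show "0 \<le> T M" unfolding T_def
      by (intro suminf_nonneg sums_summable[OF Ts]) (simp add: aa_nonneg[OF blA])
    fix w
    have app: "blinfun_apply ((\<Sum>m<M. ?a m) - ?L) w = (\<Sum>m<M. tm s m w) - exp_op A s w"
      by (simp add: blinfun.diff_left bounded_bilinear.sum_left[OF bounded_bilinear_blinfun_apply] Bl_apply Lapp blinfun.scaleR_left)
    have ws: "(\<lambda>n. tm s (n + M) w) sums (exp_op A s w - (\<Sum>m<M. tm s m w))"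
      by (rule sums_split_initial_segment[OF exp_op_sums[OF blA]])
    have sn: "summable (\<lambda>n. norm (tm s (n + M) w))"
      using summable_ignore_initial_segment[OF summable_term_norm[OF blA, of s w], of M] by simp
    have "norm (blinfun_apply ((\<Sum>m<M. ?a m) - ?L) w) = norm (\<Sum>n. tm s (n + M) w)"
      using sums_unique[OF ws] app by (simp add: norm_minus_commute)
    also have "\<dots> \<le> (\<Sum>n. norm (tm s (n + M) w))" by (rule summable_norm'[OF sn])
    also have "\<dots> \<le> (\<Sum>n. ?x ^ (n + M) / fact (n + M) * norm w)"
      by (intro suminf_le sn term_norm_le[OF blA] summable_mult2 sums_summable[OF Ts])
    also have "\<dots> = T M * norm w"
      unfolding T_def by (rule suminf_mult2[symmetric, OF sums_summable[OF Ts]])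
    finally show "norm (blinfun_apply ((\<Sum>m<M. ?a m) - ?L) w) \<le> T M * norm w" .
  qed
  have "(\<lambda>M. (\<Sum>m<M. ?a m) - ?L) \<longlonglongrightarrow> 0"
    by (rule Lim_null_comparison[OF always_eventually T0]) (use bound in blast)
  then show ?thesis unfolding sums_def by (rule LIM_zero_cancel)
qed

end


context
  fixes A :: "'a::{complex_inner,complete_space} \<Rightarrow> 'a"
  assumes blA: "bounded_linear A"
begin

abbreviation "tm_P3b t n y \<equiv> (t ^ n / fact n) *\<^sub>R (A ^^ n) y"

lemma exp_op_semigroup: "exp_op A s (exp_op A t y) = exp_op A (s + t) y"
proof -
  let ?a = "\<lambda>m. (s ^ m / fact m) *\<^sub>R Blinfun (A ^^ m)"
  let ?b = "\<lambda>n. tm_P3b t n y"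
  have sa: "summable ?a" using a_sums[OF blA] by (rule sums_summable)
  have sna: "summable (\<lambda>m. norm (?a m))"
    by (rule summable_comparison_test'[where N=0, OF sums_summable[OF exp_real_sums[of "\<bar>s\<bar> * aa A"]]]) (use norm_a[OF blA] in auto)
  have CP: "(\<lambda>k. \<Sum>i\<le>k. blinfun_apply (?a i) (?b (k - i))) sums blinfun_apply (\<Sum>k. ?a k) (\<Sum>k. ?b k)"
    by (rule Cauchy_product_sums_bil[OF bounded_bilinear_blinfun_apply sa summable_term[OF blA] sna summable_term_norm[OF blA]])
  have "blinfun_apply (\<Sum>k. ?a k) (\<Sum>k. ?b k) = exp_op A s (exp_op A t y)"
    using sums_unique[OF a_sums[OF blA]] bounded_linear_Blinfun_apply[OF bl_exp_op[OF blA]]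
    by (simp add: exp_op_def)
  moreover have "(\<lambda>k. \<Sum>i\<le>k. blinfun_apply (?a i) (?b (k - i))) = (\<lambda>k. tm_P3b (s + t) k y)"
  proof
    fix k
    have "(\<Sum>i\<le>k. blinfun_apply (?a i) (?b (k - i))) = (\<Sum>i\<le>k. (s ^ i / fact i * (t ^ (k - i) / fact (k - i))) *\<^sub>R (A ^^ k) y)"
    proof (rule sum.cong[OF refl])
      fix i assume "i \<in> {..k}"
      then have ik: "i + (k - i) = k" by simp
      have "blinfun_apply (?a i) (?b (k - i)) = (s ^ i / fact i) *\<^sub>R (A ^^ i) ((t ^ (k - i) / fact (k - i)) *\<^sub>R (A ^^ (k - i)) y)"
        by (simp add: Bl_apply[OF blA] blinfun.scaleR_left)
      also have "\<dots> = (s ^ i / fact i * (t ^ (k - i) / fact (k - i))) *\<^sub>R (A ^^ i) ((A ^^ (k - i)) y)"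
        by (simp add: linear_scale[OF bounded_linear.linear[OF bl_pow[OF blA]]])
      also have "(A ^^ i) ((A ^^ (k - i)) y) = (A ^^ k) y"
        using funpow_add[of i "k - i" A] ik by (metis comp_apply)
      finally show "blinfun_apply (?a i) (?b (k - i)) = (s ^ i / fact i * (t ^ (k - i) / fact (k - i))) *\<^sub>R (A ^^ k) y" .
    qed
    also have "\<dots> = (\<Sum>i\<le>k. s ^ i / fact i * (t ^ (k - i) / fact (k - i))) *\<^sub>R (A ^^ k) y"
      by (simp add: scaleR_sum_left)
    also have "(\<Sum>i\<le>k. s ^ i / fact i * (t ^ (k - i) / fact (k - i))) = (s + t) ^ k / fact k"
      using exp_series_add_commuting[of s t k] by (simp add: divide_inverse mult.commute)
    finally show "(\<Sum>i\<le>k. blinfun_apply (?a i) (?b (k - i))) = tm_P3b (s + t) k y" .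
  qed
  ultimately have "(\<lambda>k. tm_P3b (s + t) k y) sums exp_op A s (exp_op A t y)" using CP by simp
  then show ?thesis using exp_op_sums[OF blA] sums_unique2 by metis
qed

end


context
  fixes A :: "'a::{complex_inner,complete_space} \<Rightarrow> 'a"
  assumes blA: "bounded_linear A"
begin

abbreviation "tm_P3c t n y \<equiv> (t ^ n / fact n) *\<^sub>R (A ^^ n) y"

lemma exp_op_minus_id: "norm (exp_op A h w - w) \<le> (exp (\<bar>h\<bar> * aa A) - 1) * norm w"
proof -
  let ?x = "\<bar>h\<bar> * aa A"
  have ws: "(\<lambda>n. tm_P3c h (n + 1) w) sums (exp_op A h w - w)"
    using sums_split_initial_segment[OF exp_op_sums[OF blA, of h w], of 1] by simp
  have rs: "(\<lambda>n. ?x ^ (n + 1) / fact (n + 1)) sums (exp ?x - 1)"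
    using sums_split_initial_segment[OF exp_real_sums[of "\<bar>h\<bar> * aa A"], of 1] by simp
  have sn: "summable (\<lambda>n. norm (tm_P3c h (n + 1) w))"
    using summable_ignore_initial_segment[OF summable_term_norm[OF blA, of h w], of 1] by simp
  have "norm (exp_op A h w - w) = norm (\<Sum>n. tm_P3c h (n + 1) w)" using sums_unique[OF ws] by simp
  also have "\<dots> \<le> (\<Sum>n. norm (tm_P3c h (n + 1) w))" by (rule summable_norm'[OF sn])
  also have "\<dots> \<le> (\<Sum>n. ?x ^ (n + 1) / fact (n + 1) * norm w)"
    by (intro suminf_le sn term_norm_le[OF blA] summable_mult2 sums_summable[OF rs])
  also have "\<dots> = (exp ?x - 1) * norm w"
    using sums_unique[OF sums_mult2[OF rs, of "norm w"]] by simp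
  finally show ?thesis .
qed

lemma cinner_pow:
  assumes sa: "selfadjoint_op A"
  shows "cinner ((A ^^ n) x) y = cinner x ((A ^^ n) y)"
proof (induction n arbitrary: y)
  case 0 then show ?case by simp
next
  case (Suc n)
  have "cinner ((A ^^ Suc n) x) y = cinner (A ((A ^^ n) x)) y" by simp
  also have "\<dots> = cinner ((A ^^ n) x) (A y)" using sa by (simp add: selfadjoint_op_def)
  also have "\<dots> = cinner x ((A ^^ n) (A y))" by (rule Suc)
  also have "(A ^^ n) (A y) = (A ^^ Suc n) y" by (simp add: funpow_swap1)
  finally show ?case .
qed

lemma cinner_exp_sums: "(\<lambda>n. of_real (t ^ n / fact n) * cinner x ((A ^^ n) y)) sums cinner x (exp_op A t y)"
  using bounded_linear.sums[OF bounded_linear_cinner_right[of x], OF exp_op_sums[OF blA, of t y]]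
  by (simp add: cinner_scaleR_right)

lemma exp_op_selfadjoint:
  assumes sa: "selfadjoint_op A"
  shows "cinner x (exp_op A t y) = cinner (exp_op A t x) y"
proof -
  have "(\<lambda>n. cnj (of_real (t ^ n / fact n) * cinner y ((A ^^ n) x))) sums cnj (cinner y (exp_op A t x))"
    by (rule sums_cnj[THEN iffD2, OF cinner_exp_sums])
  moreover have "(\<lambda>n. cnj (of_real (t ^ n / fact n) * cinner y ((A ^^ n) x))) = (\<lambda>n. of_real (t ^ n / fact n) * cinner x ((A ^^ n) y))"
  proof
    fix n
    have "cnj (cinner y ((A ^^ n) x)) = cinner ((A ^^ n) x) y" by (simp only: cinner_commute[of "(A ^^ n) x" y])
    also have "\<dots> = cinner x ((A ^^ n) y)" by (rule cinner_pow[OF sa])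
    finally show "cnj (of_real (t ^ n / fact n) * cinner y ((A ^^ n) x)) = of_real (t ^ n / fact n) * cinner x ((A ^^ n) y)"
      by simp
  qed
  ultimately have "(\<lambda>n. of_real (t ^ n / fact n) * cinner x ((A ^^ n) y)) sums cinner (exp_op A t x) y"
    by (simp only: cinner_commute[of "exp_op A t x" y])
  then show ?thesis by (rule sums_unique2[OF cinner_exp_sums])
qed

end


context
  fixes A :: "'a::{complex_inner,complete_space} \<Rightarrow> 'a"
  assumes blA: "bounded_linear A"
begin

abbreviation "tm_P3d t n y \<equiv> (t ^ n / fact n) *\<^sub>R (A ^^ n) y"

lemma exp_op_cont: "continuous_on UNIV (\<lambda>t. exp_op A t g)"
proof (rule continuous_at_imp_continuous_on, intro ballI)
  fix t0 :: real
  let ?r = "\<lambda>t. exp (\<bar>t0\<bar> * aa A) * ((exp (\<bar>t - t0\<bar> * aa A) - 1) * norm g)"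
  have le: "norm (exp_op A t g - exp_op A t0 g) \<le> ?r t" for t
  proof -
    have "exp_op A t g = exp_op A t0 (exp_op A (t - t0) g)" by (simp add: exp_op_semigroup[OF blA])
    then have "exp_op A t g - exp_op A t0 g = exp_op A t0 (exp_op A (t - t0) g - g)"
      by (simp add: linear_diff[OF bounded_linear.linear[OF bl_exp_op[OF blA]]])
    then have "norm (exp_op A t g - exp_op A t0 g) \<le> exp (\<bar>t0\<bar> * aa A) * norm (exp_op A (t - t0) g - g)"
      by (simp add: exp_op_norm[OF blA])
    also have "\<dots> \<le> ?r t" by (intro mult_left_mono exp_op_minus_id[OF blA]) simp
    finally show ?thesis .
  qed
  have "(?r \<longlongrightarrow> ?r t0) (at t0)" by (intro tendsto_intros)
  then have r0: "(?r \<longlongrightarrow> 0) (at t0)" by simp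
  have "((\<lambda>t. exp_op A t g - exp_op A t0 g) \<longlongrightarrow> 0) (at t0)"
    by (rule Lim_null_comparison[OF always_eventually r0]) (use le in blast)
  then show "isCont (\<lambda>t. exp_op A t g) t0" unfolding isCont_def by (rule LIM_zero_cancel)
qed

end


definition QQ :: "('a::complex_inner \<Rightarrow> 'a) \<Rightarrow> 'a set \<Rightarrow> real \<Rightarrow> real \<Rightarrow> 'a \<Rightarrow> ennreal" where
  "QQ A G a b y = (\<Sum>\<^sub>\<infinity> g\<in>G. \<integral>\<^sup>+ t. indicator {a..<b} t * ennreal ((cmod (cinner y (exp_op A t g)))\<^sup>2) \<partial>lborel)"

lemma frame_sum_QQ: "semicont_frame_sum A G \<tau> x = QQ A G 0 \<tau> x"
  by (simp add: semicont_frame_sum_def QQ_def)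

lemma cmod_sum_sq: "(cmod (\<Sum>i\<in>I. z i))\<^sup>2 \<le> real (card I) * (\<Sum>i\<in>I. (cmod (z i))\<^sup>2)"
proof -
  have "cmod (\<Sum>i\<in>I. z i) \<le> (\<Sum>i\<in>I. cmod (z i))" by (rule norm_sum)
  then have "(cmod (\<Sum>i\<in>I. z i))\<^sup>2 \<le> (\<Sum>i\<in>I. cmod (z i))\<^sup>2"
    by (intro power_mono) auto
  also have "\<dots> \<le> (\<Sum>i\<in>I. (cmod (z i))\<^sup>2) * card I" by (rule sum_squared_le_sum_of_squares)
  finally show ?thesis by (simp add: mult.commute)
qed

lemma summable_ennreal'[simp]: "(f::_ \<Rightarrow> ennreal) summable_on S"
  by (simp add: nonneg_summable_on_complete)

lemma infsum_cmult_ennreal: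
  fixes f :: "'g \<Rightarrow> ennreal"
  assumes c: "c < top"
  shows "(\<Sum>\<^sub>\<infinity> g\<in>G. c * f g) = c * (\<Sum>\<^sub>\<infinity> g\<in>G. f g)"
proof -
  have "(sum f \<longlongrightarrow> infsum f G) (finite_subsets_at_top G)"
    using has_sum_infsum[OF summable_ennreal'[of f G]] by (simp add: has_sum_def)
  then have "((\<lambda>F. c * sum f F) \<longlongrightarrow> c * infsum f G) (finite_subsets_at_top G)"
    by (rule ennreal_tendsto_cmult[OF c])
  then have "((\<lambda>g. c * f g) has_sum (c * infsum f G)) G"
    by (simp add: has_sum_def sum_distrib_left)
  then show ?thesis by (rule infsumI)
qed

lemma infsum_sum_ennreal:
  fixes f :: "'i \<Rightarrow> 'g \<Rightarrow> ennreal"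
  shows "finite I \<Longrightarrow> (\<Sum>\<^sub>\<infinity> g\<in>G. \<Sum>i\<in>I. f i g) = (\<Sum>i\<in>I. \<Sum>\<^sub>\<infinity> g\<in>G. f i g)"
proof (induction I rule: finite_induct)
  case empty then show ?case by simp
next
  case (insert i I)
  then show ?case using infsum_add[of "f i" G "\<lambda>g. \<Sum>i\<in>I. f i g"] by simp
qed

context
  fixes A :: "'a::{complex_inner,complete_space} \<Rightarrow> 'a" and G :: "'a set"
  assumes blA: "bounded_linear A" and saA: "selfadjoint_op A"
begin

lemma meas_h: "(\<lambda>t. ennreal ((cmod (cinner y (exp_op A t g)))\<^sup>2)) \<in> borel_measurable borel"
proof -
  have "continuous_on UNIV (\<lambda>t. cinner y (exp_op A t g))"
    by (rule bounded_linear.continuous_on[OF bounded_linear_cinner_right exp_op_cont[OF blA]])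
  then have [measurable]: "(\<lambda>t. cinner y (exp_op A t g)) \<in> borel_measurable borel"
    by (rule borel_measurable_continuous_onI)
  show ?thesis by measurable
qed

lemma meas_ih: "(\<lambda>t. indicator {a..<b} t * ennreal ((cmod (cinner y (exp_op A t g)))\<^sup>2)) \<in> borel_measurable lborel"
  using meas_h[of y g] by simp

lemma QQ_lin_bound:
  assumes fin: "finite I" and ct: "\<And>i. i \<in> I \<Longrightarrow> c i < top"
    and pw: "\<And>w. ennreal ((cmod (cinner y w))\<^sup>2) \<le> (\<Sum>i\<in>I. c i * ennreal ((cmod (cinner (v i) w))\<^sup>2))"
  shows "QQ A G a b y \<le> (\<Sum>i\<in>I. c i * QQ A G a b (v i))"
proof -
  have "QQ A G a b y \<le> (\<Sum>\<^sub>\<infinity> g\<in>G. \<Sum>i\<in>I. c i * \<integral>\<^sup>+ t. indicator {a..<b} t * ennreal ((cmod (cinner (v i) (exp_op A t g)))\<^sup>2) \<partial>lborel)"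
    unfolding QQ_def
  proof (rule infsum_mono)
    fix g
    have "(\<integral>\<^sup>+ t. indicator {a..<b} t * ennreal ((cmod (cinner y (exp_op A t g)))\<^sup>2) \<partial>lborel)
       \<le> (\<integral>\<^sup>+ t. (\<Sum>i\<in>I. c i * (indicator {a..<b} t * ennreal ((cmod (cinner (v i) (exp_op A t g)))\<^sup>2))) \<partial>lborel)"
    proof (rule nn_integral_mono)
      fix t
      have "indicator {a..<b} t * ennreal ((cmod (cinner y (exp_op A t g)))\<^sup>2)
          \<le> indicator {a..<b} t * (\<Sum>i\<in>I. c i * ennreal ((cmod (cinner (v i) (exp_op A t g)))\<^sup>2))"
        by (intro mult_left_mono pw) simp
      also have "\<dots> = (\<Sum>i\<in>I. c i * (indicator {a..<b} t * ennreal ((cmod (cinner (v i) (exp_op A t g)))\<^sup>2)))"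
        by (simp add: sum_distrib_left mult.left_commute)
      finally show "indicator {a..<b} t * ennreal ((cmod (cinner y (exp_op A t g)))\<^sup>2)
          \<le> (\<Sum>i\<in>I. c i * (indicator {a..<b} t * ennreal ((cmod (cinner (v i) (exp_op A t g)))\<^sup>2)))" .
    qed
    also have "\<dots> = (\<Sum>i\<in>I. c i * \<integral>\<^sup>+ t. indicator {a..<b} t * ennreal ((cmod (cinner (v i) (exp_op A t g)))\<^sup>2) \<partial>lborel)"
    proof -
      have [measurable]: "(\<lambda>t. ennreal ((cmod (cinner w (exp_op A t g)))\<^sup>2)) \<in> borel_measurable borel" for w
        by (rule meas_h)
      have mi: "(\<lambda>t. c i * (indicator {a..<b} t * ennreal ((cmod (cinner (v i) (exp_op A t g)))\<^sup>2))) \<in> borel_measurable lborel" for i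
        by measurable
      have mi2: "(\<lambda>t. indicator {a..<b} t * ennreal ((cmod (cinner (v i) (exp_op A t g)))\<^sup>2)) \<in> borel_measurable lborel" for i
        by measurable
      show ?thesis by (subst nn_integral_sum[OF mi]) (auto intro!: sum.cong nn_integral_cmult mi2)
    qed
    finally show "(\<integral>\<^sup>+ t. indicator {a..<b} t * ennreal ((cmod (cinner y (exp_op A t g)))\<^sup>2) \<partial>lborel)
       \<le> (\<Sum>i\<in>I. c i * \<integral>\<^sup>+ t. indicator {a..<b} t * ennreal ((cmod (cinner (v i) (exp_op A t g)))\<^sup>2) \<partial>lborel)" .
  qed simp_all
  also have "\<dots> = (\<Sum>i\<in>I. c i * QQ A G a b (v i))"
    unfolding QQ_def by (simp add: infsum_sum_ennreal[OF fin] infsum_cmult_ennreal ct)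
  finally show ?thesis .
qed

end

context
  fixes A :: "'a::{complex_inner,complete_space} \<Rightarrow> 'a" and G :: "'a set"
  assumes blA: "bounded_linear A" and saA: "selfadjoint_op A"
begin

lemma QQ_sum:
  assumes fin: "finite I"
  shows "QQ A G a b (\<Sum>i\<in>I. v i) \<le> (\<Sum>i\<in>I. of_nat (card I) * QQ A G a b (v i))"
proof (rule QQ_lin_bound[OF blA saA fin])
  show "of_nat (card I) < (top::ennreal)" for i by (simp add: of_nat_less_top)
next
  fix w
  have "ennreal ((cmod (cinner (\<Sum>i\<in>I. v i) w))\<^sup>2) \<le> ennreal (real (card I) * (\<Sum>i\<in>I. (cmod (cinner (v i) w))\<^sup>2))"
    by (intro ennreal_leI) (simp add: cinner_sum_left cmod_sum_sq)
  also have "\<dots> = (\<Sum>i\<in>I. of_nat (card I) * ennreal ((cmod (cinner (v i) w))\<^sup>2))"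
    by (simp add: ennreal_mult sum_distrib_left ennreal_of_nat_eq_real_of_nat sum_ennreal[symmetric])
  finally show "ennreal ((cmod (cinner (\<Sum>i\<in>I. v i) w))\<^sup>2) \<le> (\<Sum>i\<in>I. of_nat (card I) * ennreal ((cmod (cinner (v i) w))\<^sup>2))" .
qed

lemma QQ_scale: "QQ A G a b (r *\<^sub>R y) \<le> ennreal (r\<^sup>2) * QQ A G a b y"
  using QQ_lin_bound[OF blA saA, of "{()}" "\<lambda>_. ennreal (r\<^sup>2)" "r *\<^sub>R y" "\<lambda>_. y" G a b]
  by (simp add: cinner_scaleR_left norm_mult power_mult_distrib ennreal_mult)

lemma QQ_diff: "QQ A G a b (y - z) \<le> 2 * QQ A G a b y + 2 * QQ A G a b z"
proof -
  have "QQ A G a b (y - z) \<le> (\<Sum>i\<in>{True, False}. 2 * QQ A G a b (if i then y else z))"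
  proof (rule QQ_lin_bound[OF blA saA])
    show "finite {True, False}" by simp
    show "(2::ennreal) < top" for i by simp
  next
    fix w
    have "(cmod (cinner (y - z) w))\<^sup>2 \<le> 2 * (cmod (cinner y w))\<^sup>2 + 2 * (cmod (cinner z w))\<^sup>2"
    proof -
      have "cmod (cinner (y - z) w) \<le> cmod (cinner y w) + cmod (cinner z w)"
        by (simp add: cinner_diff_left norm_triangle_ineq4)
      then have "(cmod (cinner (y - z) w))\<^sup>2 \<le> (cmod (cinner y w) + cmod (cinner z w))\<^sup>2"
        by (intro power_mono) auto
      also have "\<dots> \<le> 2 * (cmod (cinner y w))\<^sup>2 + 2 * (cmod (cinner z w))\<^sup>2"
      proof -
        have "(cmod (cinner y w) + cmod (cinner z w))\<^sup>2 + (cmod (cinner y w) - cmod (cinner z w))\<^sup>2 = 2 * (cmod (cinner y w))\<^sup>2 + 2 * (cmod (cinner z w))\<^sup>2"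
          by (simp add: power2_eq_square algebra_simps)
        moreover have "0 \<le> (cmod (cinner y w) - cmod (cinner z w))\<^sup>2" by simp
        ultimately show ?thesis by linarith
      qed
      finally show ?thesis .
    qed
    then have "ennreal ((cmod (cinner (y - z) w))\<^sup>2) \<le> ennreal (2 * (cmod (cinner y w))\<^sup>2 + 2 * (cmod (cinner z w))\<^sup>2)"
      by (rule ennreal_leI)
    also have "\<dots> = 2 * ennreal ((cmod (cinner y w))\<^sup>2) + 2 * ennreal ((cmod (cinner z w))\<^sup>2)"
      by (simp add: ennreal_plus ennreal_mult)
    finally show "ennreal ((cmod (cinner (y - z) w))\<^sup>2) \<le> (\<Sum>i\<in>{True, False}. 2 * ennreal ((cmod (cinner (if i then y else z) w))\<^sup>2))"
      by simp
  qed
  then show ?thesis by simp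
qed

end

context
  fixes A :: "'a::{complex_inner,complete_space} \<Rightarrow> 'a" and G :: "'a set"
  assumes blA: "bounded_linear A" and saA: "selfadjoint_op A"
begin

lemma QQ_mono_int: "a \<le> a' \<Longrightarrow> b' \<le> b \<Longrightarrow> QQ A G a' b' y \<le> QQ A G a b y"
  unfolding QQ_def
  by (intro infsum_mono nn_integral_mono mult_right_mono) (auto simp: indicator_def)

lemma indicator_split:
  assumes e: "0 < e" and c: "c \<le> a + real K * e"
  shows "(indicator {a..<c} t :: ennreal) \<le> (\<Sum>k<K. indicator {a + real k * e..<a + real (Suc k) * e} t)"
proof (cases "t \<in> {a..<c}")
  case False then show ?thesis by simp
next
  case True
  define k where "k = nat \<lfloor>(t - a) / e\<rfloor>"
  have t0: "0 \<le> (t - a) / e" using True e by simp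
  have k1: "real k \<le> (t - a) / e" unfolding k_def using t0 by linarith
  have k2: "(t - a) / e < real k + 1" unfolding k_def using t0 by linarith
  have tin: "t \<in> {a + real k * e..<a + real (Suc k) * e}"
    using k1 k2 e by (simp add: field_simps)
  moreover have "k < K"
  proof -
    have "(t - a) / e < real K" using True c e by (simp add: field_simps)
    then show ?thesis using k1 by linarith
  qed
  ultimately have "(indicator {a + real k * e..<a + real (Suc k) * e} t :: ennreal) \<le> (\<Sum>k<K. indicator {a + real k * e..<a + real (Suc k) * e} t)"
    by (intro member_le_sum) auto
  then show ?thesis using True tin by simp
qed

lemma QQ_split:
  assumes e: "0 < e" and c: "c \<le> a + real K * e"
  shows "QQ A G a c y \<le> (\<Sum>k<K. QQ A G (a + real k * e) (a + real (Suc k) * e) y)"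
proof -
  have "QQ A G a c y \<le> (\<Sum>\<^sub>\<infinity> g\<in>G. \<Sum>k<K. \<integral>\<^sup>+ t. indicator {a + real k * e..<a + real (Suc k) * e} t * ennreal ((cmod (cinner y (exp_op A t g)))\<^sup>2) \<partial>lborel)"
    unfolding QQ_def
  proof (rule infsum_mono)
    fix g
    have "(\<integral>\<^sup>+ t. indicator {a..<c} t * ennreal ((cmod (cinner y (exp_op A t g)))\<^sup>2) \<partial>lborel)
       \<le> (\<integral>\<^sup>+ t. (\<Sum>k<K. indicator {a + real k * e..<a + real (Suc k) * e} t * ennreal ((cmod (cinner y (exp_op A t g)))\<^sup>2)) \<partial>lborel)"
    proof (rule nn_integral_mono)
      fix x
      have "indicator {a..<c} x * ennreal ((cmod (cinner y (exp_op A x g)))\<^sup>2)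
          \<le> (\<Sum>k<K. indicator {a + real k * e..<a + real (Suc k) * e} x) * ennreal ((cmod (cinner y (exp_op A x g)))\<^sup>2)"
        by (rule mult_right_mono[OF indicator_split[OF e c]]) simp
      then show "indicator {a..<c} x * ennreal ((cmod (cinner y (exp_op A x g)))\<^sup>2)
          \<le> (\<Sum>k<K. indicator {a + real k * e..<a + real (Suc k) * e} x * ennreal ((cmod (cinner y (exp_op A x g)))\<^sup>2))"
        by (simp only: sum_distrib_right)
    qed
    also have "\<dots> = (\<Sum>k<K. \<integral>\<^sup>+ t. indicator {a + real k * e..<a + real (Suc k) * e} t * ennreal ((cmod (cinner y (exp_op A t g)))\<^sup>2) \<partial>lborel)"
      by (rule nn_integral_sum) (rule meas_ih[OF blA saA])
    finally show "(\<integral>\<^sup>+ t. indicator {a..<c} t * ennreal ((cmod (cinner y (exp_op A t g)))\<^sup>2) \<partial>lborel)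
       \<le> (\<Sum>k<K. \<integral>\<^sup>+ t. indicator {a + real k * e..<a + real (Suc k) * e} t * ennreal ((cmod (cinner y (exp_op A t g)))\<^sup>2) \<partial>lborel)" .
  qed simp_all
  also have "\<dots> = (\<Sum>k<K. QQ A G (a + real k * e) (a + real (Suc k) * e) y)"
    unfolding QQ_def by (simp add: infsum_sum_ennreal)
  finally show ?thesis .
qed

lemma QQ_shift: "QQ A G s (s + e) y = QQ A G 0 e (exp_op A s y)"
  unfolding QQ_def
proof (rule infsum_cong)
  fix g
  have "(\<integral>\<^sup>+ t. indicator {s..<s + e} t * ennreal ((cmod (cinner y (exp_op A t g)))\<^sup>2) \<partial>lborel)
      = (\<integral>\<^sup>+ x. indicator {s..<s + e} (s + 1 * x) * ennreal ((cmod (cinner y (exp_op A (s + 1 * x) g)))\<^sup>2) \<partial>lborel)"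
  proof -
    have m: "(\<lambda>t. indicator {s..<s + e} t * ennreal ((cmod (cinner y (exp_op A t g)))\<^sup>2)) \<in> borel_measurable borel"
      using meas_ih[OF blA saA, of s "s + e" y g] by simp
    show ?thesis using nn_integral_real_affine[OF m, of 1 s] by simp
  qed
  also have "\<dots> = (\<integral>\<^sup>+ x. indicator {0..<e} x * ennreal ((cmod (cinner (exp_op A s y) (exp_op A x g)))\<^sup>2) \<partial>lborel)"
  proof (intro nn_integral_cong)
    fix x
    have "cinner y (exp_op A (s + x) g) = cinner (exp_op A s y) (exp_op A x g)"
      by (simp add: exp_op_semigroup[OF blA, symmetric] exp_op_selfadjoint[OF blA saA])
    moreover have "(indicator {s..<s + e} (s + x) :: ennreal) = indicator {0..<e} x"
      by (simp add: indicator_def)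
    ultimately show "indicator {s..<s + e} (s + 1 * x) * ennreal ((cmod (cinner y (exp_op A (s + 1 * x) g)))\<^sup>2)
      = indicator {0..<e} x * ennreal ((cmod (cinner (exp_op A s y) (exp_op A x g)))\<^sup>2)" by simp
  qed
  finally show "(\<integral>\<^sup>+ t. indicator {s..<s + e} t * ennreal ((cmod (cinner y (exp_op A t g)))\<^sup>2) \<partial>lborel)
      = (\<integral>\<^sup>+ x. indicator {0..<e} x * ennreal ((cmod (cinner (exp_op A s y) (exp_op A x g)))\<^sup>2) \<partial>lborel)" .
qed

end


lemma bl_funpow:
  fixes f :: "'a::real_normed_vector \<Rightarrow> 'a"
  assumes f: "bounded_linear f" shows "bounded_linear (f ^^ n)"
proof (induction n)
  case 0
  have "f ^^ 0 = (\<lambda>x. x)" by (rule ext) simp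
  then show ?case using bounded_linear_ident by metis
next
  case (Suc n)
  have "bounded_linear (\<lambda>x. f ((f ^^ n) x))" by (rule bounded_linear_compose[OF f Suc])
  moreover have "f ^^ Suc n = (\<lambda>x. f ((f ^^ n) x))" by (rule ext) simp
  ultimately show ?case by simp
qed

lemma newton:
  fixes D :: "'a::real_vector \<Rightarrow> 'a"
  assumes lin: "linear D" and u: "\<And>i. u (Suc i) = u i + D (u i)"
  shows "u k = (\<Sum>j\<le>k. real (k choose j) *\<^sub>R (D ^^ j) (u 0))"
proof (induction k)
  case 0 then show ?case by simp
next
  case (Suc k)
  let ?f = "\<lambda>j. (D ^^ j) (u 0)"
  have "u (Suc k) = (\<Sum>j\<le>k. real (k choose j) *\<^sub>R ?f j) + D (\<Sum>j\<le>k. real (k choose j) *\<^sub>R ?f j)"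
    using u Suc by simp
  also have "D (\<Sum>j\<le>k. real (k choose j) *\<^sub>R ?f j) = (\<Sum>j\<le>k. real (k choose j) *\<^sub>R ?f (Suc j))"
    by (simp add: linear_sum[OF lin] linear_scale[OF lin])
  also have "(\<Sum>j\<le>k. real (k choose j) *\<^sub>R ?f j) = ?f 0 + (\<Sum>j\<le>k. real (k choose Suc j) *\<^sub>R ?f (Suc j))"
  proof -
    have "(\<Sum>j\<le>k. real (k choose j) *\<^sub>R ?f j) = (\<Sum>j\<le>Suc k. real (k choose j) *\<^sub>R ?f j)"
      by simp
    also have "\<dots> = ?f 0 + (\<Sum>j\<le>k. real (k choose Suc j) *\<^sub>R ?f (Suc j))"
      by (subst sum.atMost_Suc_shift) simp
    finally show ?thesis .
  qed
  also have "(\<Sum>j\<le>Suc k. real (Suc k choose j) *\<^sub>R ?f j) = ?f 0 + (\<Sum>j\<le>k. real (Suc k choose Suc j) *\<^sub>R ?f (Suc j))"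
    by (subst sum.atMost_Suc_shift) simp
  moreover have "(\<Sum>j\<le>k. real (Suc k choose Suc j) *\<^sub>R ?f (Suc j)) = (\<Sum>j\<le>k. real (k choose j) *\<^sub>R ?f (Suc j)) + (\<Sum>j\<le>k. real (k choose Suc j) *\<^sub>R ?f (Suc j))"
    by (simp add: scaleR_add_left sum.distrib)
  ultimately show ?case by (simp add: algebra_simps)
qed

lemma ennreal_lb:
  fixes B :: ennreal
  assumes M: "0 < M" and r: "0 \<le> r" and X: "0 \<le> X" and rX: "r \<le> X / 2"
    and h: "ennreal X \<le> ennreal M * B + ennreal r"
  shows "ennreal (X / (2 * M)) \<le> B"
proof (cases B)
  case (real b)
  then have "ennreal X \<le> ennreal (M * b + r)"
    using h M r by (simp add: ennreal_mult ennreal_plus)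
  then have "X \<le> M * b + r" using M r real by (subst (asm) ennreal_le_iff) auto
  then have "X / 2 \<le> M * b" using rX by linarith
  then have "X / (2 * M) \<le> b" using M by (simp add: field_simps)
  then show ?thesis using real by (simp add: ennreal_leI)
next
  case top then show ?thesis by simp
qed


context
  fixes A :: "'a::{complex_inner,complete_space} \<Rightarrow> 'a" and G :: "'a set"
    and c2 \<tau> e :: real and N :: nat and x :: 'a
  assumes blA: "bounded_linear A" and saA: "selfadjoint_op A"
    and c2: "0 < c2" and up1: "\<And>y. QQ A G 0 1 y \<le> ennreal (c2 * (norm y)\<^sup>2)"
    and tau: "0 < \<tau>" and N: "1 \<le> N" and e_def: "e = \<tau> / real N" and e1: "e \<le> 1"
begin

definition "uu i = exp_op A (real i * e) x"
definition "DD y = exp_op A e y - y"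
definition "dl = exp (e * aa A) - 1"
abbreviation "BB \<equiv> QQ A G 0 \<tau> x"

lemma e_pos: "0 < e" using tau N by (simp add: e_def)

lemma bl_DD: "bounded_linear DD"
  unfolding DD_def by (intro bounded_linear_sub bl_exp_op[OF blA] bounded_linear_ident)

lemma uu_Suc: "uu (Suc i) = uu i + DD (uu i)"
proof -
  have "uu (Suc i) = exp_op A e (uu i)"
    unfolding uu_def by (simp add: exp_op_semigroup[OF blA] algebra_simps)
  then show ?thesis by (simp add: DD_def)
qed

lemma uu_0: "uu 0 = x" unfolding uu_def by (simp add: exp_op_0[OF blA])

lemma q_uu: "i < N \<Longrightarrow> QQ A G 0 e (uu i) \<le> BB"
proof -
  assume i: "i < N"
  have "QQ A G 0 e (uu i) = QQ A G (real i * e) (real i * e + e) x"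
    unfolding uu_def by (rule QQ_shift[OF blA saA, symmetric])
  also have "\<dots> \<le> BB"
  proof (rule QQ_mono_int[OF blA saA])
    show "0 \<le> real i * e" using e_pos by simp
    have "real i * e + e = real (Suc i) * e" by (simp add: algebra_simps)
    also have "\<dots> \<le> real N * e" using i e_pos by (intro mult_right_mono) auto
    also have "\<dots> = \<tau>" using N by (simp add: e_def)
    finally show "real i * e + e \<le> \<tau>" .
  qed
  finally show ?thesis .
qed

lemma q_DD: "i + j < N \<Longrightarrow> QQ A G 0 e ((DD ^^ j) (uu i)) \<le> ennreal (4 ^ j) * BB"
proof (induction j arbitrary: i)
  case 0 then show ?case using q_uu by simp
next
  case (Suc j)
  have lin: "linear (DD ^^ j)" by (rule bounded_linear.linear[OF bl_funpow[OF bl_DD]])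
  have "(DD ^^ Suc j) (uu i) = (DD ^^ j) (DD (uu i))" by (simp only: funpow_Suc_right comp_apply)
  also have "DD (uu i) = uu (Suc i) - uu i" using uu_Suc by simp
  also have "(DD ^^ j) (uu (Suc i) - uu i) = (DD ^^ j) (uu (Suc i)) - (DD ^^ j) (uu i)"
    by (rule linear_diff[OF lin])
  finally have eq: "(DD ^^ Suc j) (uu i) = (DD ^^ j) (uu (Suc i)) - (DD ^^ j) (uu i)" .
  have h1: "QQ A G 0 e ((DD ^^ j) (uu (Suc i))) \<le> ennreal (4 ^ j) * BB" using Suc by simp
  have h2: "QQ A G 0 e ((DD ^^ j) (uu i)) \<le> ennreal (4 ^ j) * BB" using Suc by simp
  have "QQ A G 0 e ((DD ^^ Suc j) (uu i)) \<le> 2 * QQ A G 0 e ((DD ^^ j) (uu (Suc i))) + 2 * QQ A G 0 e ((DD ^^ j) (uu i))"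
    unfolding eq by (rule QQ_diff[OF blA saA])
  also have "\<dots> \<le> 2 * (ennreal (4 ^ j) * BB) + 2 * (ennreal (4 ^ j) * BB)"
    by (intro add_mono mult_left_mono h1 h2) simp_all
  also have "\<dots> = ennreal (4 ^ Suc j) * BB"
  proof -
    have "ennreal (4 ^ Suc j) = 4 * ennreal (4 ^ j)"
      by (simp add: ennreal_mult ennreal_numeral[symmetric] del: ennreal_numeral)
    moreover have "2 * (ennreal (4 ^ j) * BB) + 2 * (ennreal (4 ^ j) * BB) = (2 + 2) * (ennreal (4 ^ j) * BB)"
      by (rule distrib_right[symmetric])
    moreover have "(2 + 2 :: ennreal) = 4" by simp
    ultimately show ?thesis by (simp only: mult.assoc)
  qed
  finally show ?case .
qed

lemma dl_nonneg: "0 \<le> dl"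
  unfolding dl_def using e_pos aa_nonneg[OF blA] by simp

lemma norm_DD: "norm (DD y) \<le> dl * norm y"
  using exp_op_minus_id[OF blA, of e y] e_pos by (simp add: DD_def dl_def)

lemma norm_DDj: "norm ((DD ^^ j) y) \<le> dl ^ j * norm y"
proof (induction j)
  case 0 then show ?case by simp
next
  case (Suc j)
  have "norm ((DD ^^ Suc j) y) = norm (DD ((DD ^^ j) y))" by simp
  also have "\<dots> \<le> dl * norm ((DD ^^ j) y)" by (rule norm_DD)
  also have "\<dots> \<le> dl * (dl ^ j * norm y)" by (rule mult_left_mono[OF Suc dl_nonneg])
  finally show ?case by (simp add: mult.assoc)
qed

lemma newton_uu: "uu k = (\<Sum>j\<le>k. real (k choose j) *\<^sub>R (DD ^^ j) x)"
  using newton[where D=DD and u=uu, OF bounded_linear.linear[OF bl_DD] uu_Suc, of k] by (simp add: uu_0)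

lemma four_pow: "(4::real) ^ k = (2 ^ k) ^ 2"
  by (simp add: power2_eq_square power_mult_distrib[symmetric])

lemma row_sum_real: "(\<Sum>j\<le>k. real (k choose j)) = 2 ^ k"
  by (simp flip: of_nat_sum add: choose_row_sum)

lemma q_uk:
  assumes dl1: "dl \<le> 1"
  shows "QQ A G 0 e (uu k) \<le> ennreal (2 * (real N * real N * 4 ^ k * 4 ^ N)) * BB
             + ennreal (2 * (c2 * (4 ^ k * dl ^ (2 * N) * (norm x)\<^sup>2)))"
proof -
  define J where "J = {..k} \<inter> {..<N}"
  define R0 where "R0 = {..k} - {..<N}"
  define f where "f j = real (k choose j) *\<^sub>R (DD ^^ j) x" for j
  define P where "P = sum f J"
  define R where "R = sum f R0"
  have finJ: "finite J" unfolding J_def by simp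
  have ukPR: "uu k = P - (- R)"
    using sum.Int_Diff[of "{..k}" f "{..<N}"] newton_uu
    by (simp add: P_def R_def J_def R0_def f_def)
  have nR: "norm R \<le> 2 ^ k * dl ^ N * norm x"
  proof -
    have "norm R \<le> (\<Sum>j\<in>R0. norm (f j))" unfolding R_def by (rule norm_sum)
    also have "\<dots> \<le> (\<Sum>j\<in>R0. real (k choose j) * (dl ^ N * norm x))"
    proof (rule sum_mono)
      fix j assume j: "j \<in> R0"
      have "norm (f j) = real (k choose j) * norm ((DD ^^ j) x)" by (simp add: f_def)
      also have "\<dots> \<le> real (k choose j) * (dl ^ j * norm x)" by (intro mult_left_mono norm_DDj) simp
      also have "dl ^ j \<le> dl ^ N" using j dl1 dl_nonneg by (intro power_decreasing) (auto simp: R0_def)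
      then have "real (k choose j) * (dl ^ j * norm x) \<le> real (k choose j) * (dl ^ N * norm x)"
        by (intro mult_left_mono mult_right_mono) auto
      finally show "norm (f j) \<le> real (k choose j) * (dl ^ N * norm x)" .
    qed
    also have "\<dots> \<le> (\<Sum>j\<le>k. real (k choose j) * (dl ^ N * norm x))"
      by (rule sum_mono2) (auto simp: R0_def dl_nonneg)
    also have "\<dots> = 2 ^ k * dl ^ N * norm x"
      by (simp add: sum_distrib_right[symmetric] row_sum_real mult.assoc)
    finally show ?thesis .
  qed
  have qR: "QQ A G 0 e (- R) \<le> ennreal (c2 * (4 ^ k * dl ^ (2 * N) * (norm x)\<^sup>2))"
  proof -
    have "QQ A G 0 e (- R) = QQ A G 0 e ((- 1) *\<^sub>R R)" by simp
    also have "\<dots> \<le> ennreal ((- 1)\<^sup>2) * QQ A G 0 e R" by (rule QQ_scale[OF blA saA])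
    also have "\<dots> = QQ A G 0 e R" by simp
    also have "\<dots> \<le> QQ A G 0 1 R" by (rule QQ_mono_int[OF blA saA]) (use e1 in auto)
    also have "\<dots> \<le> ennreal (c2 * (norm R)\<^sup>2)" by (rule up1)
    also have "\<dots> \<le> ennreal (c2 * (4 ^ k * dl ^ (2 * N) * (norm x)\<^sup>2))"
    proof (intro ennreal_leI mult_left_mono)
      have "(norm R)\<^sup>2 \<le> (2 ^ k * dl ^ N * norm x)\<^sup>2" by (intro power_mono nR) simp
      also have "\<dots> = 4 ^ k * dl ^ (2 * N) * (norm x)\<^sup>2"
        by (simp add: power_mult_distrib four_pow power_mult[symmetric] mult.commute)
      finally show "(norm R)\<^sup>2 \<le> 4 ^ k * dl ^ (2 * N) * (norm x)\<^sup>2" .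
    qed (use c2 in simp)
    finally show ?thesis .
  qed
  have cardJ: "card J \<le> N" unfolding J_def by (metis card_lessThan card_mono finite_lessThan inf_le2)
  have qP: "QQ A G 0 e P \<le> ennreal (real N * real N * 4 ^ k * 4 ^ N) * BB"
  proof -
    have "QQ A G 0 e P \<le> (\<Sum>j\<in>J. of_nat (card J) * QQ A G 0 e (f j))"
      unfolding P_def by (rule QQ_sum[OF blA saA finJ])
    also have "\<dots> \<le> (\<Sum>j\<in>J. ennreal (real N * 4 ^ k * 4 ^ N) * BB)"
    proof (rule sum_mono)
      fix j assume j: "j \<in> J"
      then have jN: "j < N" and jk: "j \<le> k" by (auto simp: J_def)
      have "QQ A G 0 e (f j) \<le> ennreal ((real (k choose j))\<^sup>2) * QQ A G 0 e ((DD ^^ j) x)"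
        unfolding f_def by (rule QQ_scale[OF blA saA])
      also have "\<dots> \<le> ennreal ((real (k choose j))\<^sup>2) * (ennreal (4 ^ j) * BB)"
        using q_DD[of 0 j] jN by (intro mult_left_mono) (auto simp: uu_0)
      finally have a: "QQ A G 0 e (f j) \<le> ennreal ((real (k choose j))\<^sup>2) * (ennreal (4 ^ j) * BB)" .
      have "of_nat (card J) * QQ A G 0 e (f j) \<le> ennreal (real (card J)) * (ennreal ((real (k choose j))\<^sup>2) * (ennreal (4 ^ j) * BB))"
        using a by (simp add: ennreal_of_nat_eq_real_of_nat mult_left_mono)
      also have "\<dots> = ennreal (real (card J) * (real (k choose j))\<^sup>2 * 4 ^ j) * BB"
        by (simp add: ennreal_mult mult.assoc)
      also have "\<dots> \<le> ennreal (real N * 4 ^ k * 4 ^ N) * BB"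
      proof (intro mult_right_mono ennreal_leI mult_mono)
        show "real (card J) \<le> real N" using cardJ by simp
        have "real (k choose j) \<le> 2 ^ k" using binomial_le_pow2[of k j] by (metis of_nat_le_iff of_nat_numeral of_nat_power)
        then have "(real (k choose j))\<^sup>2 \<le> (2 ^ k)\<^sup>2" by (intro power_mono) auto
        then show "(real (k choose j))\<^sup>2 \<le> 4 ^ k" by (simp add: four_pow)
        show "(4::real) ^ j \<le> 4 ^ N" using jN by (intro power_increasing) auto
      qed auto
      finally show "of_nat (card J) * QQ A G 0 e (f j) \<le> ennreal (real N * 4 ^ k * 4 ^ N) * BB" .
    qed
    also have "\<dots> = of_nat (card J) * (ennreal (real N * 4 ^ k * 4 ^ N) * BB)" by simp
    also have "\<dots> \<le> of_nat N * (ennreal (real N * 4 ^ k * 4 ^ N) * BB)"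
      using cardJ by (intro mult_right_mono) auto
    also have "\<dots> = ennreal (real N * real N * 4 ^ k * 4 ^ N) * BB"
      by (simp add: ennreal_of_nat_eq_real_of_nat ennreal_mult mult.assoc)
    finally show ?thesis .
  qed
  have "QQ A G 0 e (uu k) \<le> 2 * QQ A G 0 e P + 2 * QQ A G 0 e (- R)"
    unfolding ukPR by (rule QQ_diff[OF blA saA])
  also have "\<dots> \<le> 2 * (ennreal (real N * real N * 4 ^ k * 4 ^ N) * BB) + 2 * ennreal (c2 * (4 ^ k * dl ^ (2 * N) * (norm x)\<^sup>2))"
    by (intro add_mono mult_left_mono qP qR) auto
  also have "\<dots> = ennreal (2 * (real N * real N * 4 ^ k * 4 ^ N)) * BB + ennreal (2 * (c2 * (4 ^ k * dl ^ (2 * N) * (norm x)\<^sup>2)))"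
    using c2 dl_nonneg by (simp add: ennreal_mult mult.assoc)
  finally show ?thesis .
qed

lemma lower_core:
  assumes dl1: "dl \<le> 1" and K: "1 \<le> real K * e"
    and lo: "ennreal (c1 * (norm x)\<^sup>2) \<le> QQ A G 0 1 x"
  shows "ennreal (c1 * (norm x)\<^sup>2) \<le> ennreal (real K * (2 * (real N * real N * 4 ^ K * 4 ^ N))) * BB
             + ennreal (real K * (2 * (c2 * (4 ^ K * dl ^ (2 * N) * (norm x)\<^sup>2))))"
proof -
  let ?C1 = "ennreal (2 * (real N * real N * 4 ^ K * 4 ^ N))"
  let ?C2 = "ennreal (2 * (c2 * (4 ^ K * dl ^ (2 * N) * (norm x)\<^sup>2)))"
  have "QQ A G 0 1 x \<le> (\<Sum>k<K. QQ A G (0 + real k * e) (0 + real (Suc k) * e) x)"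
    by (rule QQ_split[OF blA saA e_pos]) (use K in simp)
  also have "\<dots> \<le> (\<Sum>k<K. ?C1 * BB + ?C2)"
  proof (rule sum_mono)
    fix k assume "k \<in> {..<K}"
    then have kK: "k \<le> K" by simp
    have "QQ A G (0 + real k * e) (0 + real (Suc k) * e) x = QQ A G (real k * e) (real k * e + e) x"
      by (simp add: algebra_simps)
    also have "\<dots> = QQ A G 0 e (uu k)" unfolding uu_def by (rule QQ_shift[OF blA saA])
    also have "\<dots> \<le> ennreal (2 * (real N * real N * 4 ^ k * 4 ^ N)) * BB
             + ennreal (2 * (c2 * (4 ^ k * dl ^ (2 * N) * (norm x)\<^sup>2)))" by (rule q_uk[OF dl1])
    also have "\<dots> \<le> ?C1 * BB + ?C2"
    proof (intro add_mono mult_right_mono ennreal_leI mult_left_mono mult_right_mono)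
      show "(4::real) ^ k \<le> 4 ^ K" using kK by (intro power_increasing) auto
      show "(4::real) ^ k \<le> 4 ^ K" using kK by (intro power_increasing) auto
    qed (use c2 dl_nonneg in auto)
    finally show "QQ A G (0 + real k * e) (0 + real (Suc k) * e) x \<le> ?C1 * BB + ?C2" .
  qed
  also have "\<dots> = of_nat K * (?C1 * BB + ?C2)" by simp
  also have "\<dots> = ennreal (real K * (2 * (real N * real N * 4 ^ K * 4 ^ N))) * BB
             + ennreal (real K * (2 * (c2 * (4 ^ K * dl ^ (2 * N) * (norm x)\<^sup>2))))"
    using c2 dl_nonneg by (simp add: ennreal_of_nat_eq_real_of_nat ennreal_mult distrib_left mult.assoc)
  finally show ?thesis using lo by (rule order_trans[rotated])
qed

end


lemma exp_minus_one_le: "0 \<le> (y::real) \<Longrightarrow> exp y - 1 \<le> y * exp y"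
proof -
  assume y: "0 \<le> y"
  have "1 + (- y) \<le> exp (- y)" by (rule exp_ge_add_one_self)
  then have "(1 - y) * exp y \<le> exp (- y) * exp y" by (intro mult_right_mono) auto
  also have "exp (- y) * exp y = 1" by (simp add: exp_minus field_simps)
  finally show ?thesis by (simp add: algebra_simps)
qed

lemma param_bound:
  fixes dl c1 c2 z :: real and m N :: nat
  assumes m: "1 \<le> m" and N: "1 \<le> N" and dl0: "0 \<le> dl" and dlb: "dl \<le> 1 / 2 ^ (m + 1)"
    and Nb: "(1/2) ^ N \<le> c1 / (4 * c2 * m)" and c1: "0 < c1" and c2: "0 < c2" and z: "0 \<le> z"
  shows "real (m * N) * (2 * (c2 * (4 ^ (m * N) * dl ^ (2 * N) * z))) \<le> c1 * z / 2"
proof -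
  have eq1: "(4::real) ^ (m * N) * dl ^ (2 * N) = (4 ^ m * dl\<^sup>2) ^ N"
    by (simp add: power_mult power_mult_distrib)
  have "dl\<^sup>2 \<le> (1 / 2 ^ (m + 1))\<^sup>2" using dl0 dlb by (intro power_mono) auto
  also have "\<dots> = 1 / 4 ^ (m + 1)"
    by (simp add: power_divide power_mult[symmetric] mult.commute power_mult_distrib[symmetric] power2_eq_square)
  finally have "4 ^ m * dl\<^sup>2 \<le> (4::real) ^ m * (1 / 4 ^ (m + 1))" by (intro mult_left_mono) auto
  also have "\<dots> = 1 / 4" by simp
  finally have b4: "4 ^ m * dl\<^sup>2 \<le> (1/4::real)" .
  have b4N: "(4 ^ m * dl\<^sup>2) ^ N \<le> (1/4::real) ^ N" using b4 by (intro power_mono) auto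
  have NN: "real N * (1/4::real) ^ N \<le> (1/2) ^ N"
  proof -
    have "real N \<le> 2 ^ N" using less_exp[of N] by (metis less_imp_le of_nat_le_iff of_nat_numeral of_nat_power)
    then have "real N * (1/2::real) ^ N \<le> 2 ^ N * (1/2) ^ N" by (intro mult_right_mono) auto
    also have "\<dots> = 1" by (simp add: power_mult_distrib[symmetric])
    finally have h1: "real N * (1/2::real) ^ N \<le> 1" .
    have "real N * (1/2::real) ^ N * (1/2) ^ N \<le> (1/2) ^ N" by (rule mult_left_le_one_le[OF _ _ h1]) auto
    moreover have "(1/4::real) ^ N = (1/2) ^ N * (1/2) ^ N" by (simp add: power_mult_distrib[symmetric])
    ultimately show ?thesis by (simp add: mult.assoc)
  qed
  have "real (m * N) * (2 * (c2 * (4 ^ (m * N) * dl ^ (2 * N) * z))) = real m * 2 * c2 * z * (real N * (4 ^ (m * N) * dl ^ (2 * N)))"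
    by (simp add: mult_ac)
  also have "\<dots> = real m * 2 * c2 * z * (real N * (4 ^ m * dl\<^sup>2) ^ N)"
    by (simp only: eq1)
  also have "\<dots> \<le> real m * 2 * c2 * z * (real N * (1/4) ^ N)"
    using b4N c2 z by (intro mult_left_mono) auto
  also have "\<dots> \<le> real m * 2 * c2 * z * (1/2) ^ N"
    using NN c2 z by (intro mult_left_mono) auto
  also have "\<dots> \<le> real m * 2 * c2 * z * (c1 / (4 * c2 * m))"
    using Nb c2 z by (intro mult_left_mono) auto
  also have "\<dots> = c1 * z / 2" using m c2 by (simp add: field_simps)
  finally show ?thesis .
qed


lemma one_le_nat_ceiling: "0 < (x::real) \<Longrightarrow> 1 \<le> nat \<lceil>x\<rceil>"
proof -
  assume "0 < x"
  then have "0 < real_of_int \<lceil>x\<rceil>" using le_of_int_ceiling[of x] by linarith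
  then have "1 \<le> \<lceil>x\<rceil>" by simp
  then have "nat 1 \<le> nat \<lceil>x\<rceil>" by (rule nat_mono)
  then show ?thesis by simp
qed

lemma lower_small:
  fixes A :: "'a::{complex_inner,complete_space} \<Rightarrow> 'a" and G :: "'a set"
  assumes blA: "bounded_linear A" and saA: "selfadjoint_op A"
    and c1: "0 < c1" and c2: "0 < c2"
    and lo1: "\<And>y. ennreal (c1 * (norm y)\<^sup>2) \<le> QQ A G 0 1 y"
    and up1: "\<And>y. QQ A G 0 1 y \<le> ennreal (c2 * (norm y)\<^sup>2)"
    and tau: "0 < \<tau>" and tau1: "\<tau> < 1"
  shows "\<exists>c>0. \<forall>x. ennreal (c * (norm x)\<^sup>2) \<le> QQ A G 0 \<tau> x"
proof -
  define m where "m = nat \<lceil>1 / \<tau>\<rceil>"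
  have mt: "1 / \<tau> \<le> real m" unfolding m_def by linarith
  have m1: "1 \<le> m" unfolding m_def using tau by (intro one_le_nat_ceiling) simp
  define b where "b = aa A * exp (aa A)"
  have b0: "0 \<le> b" unfolding b_def using aa_nonneg[OF blA] by simp
  have "0 < c1 / (4 * c2 * real m)" using c1 c2 m1 by simp
  then obtain N0 where N0: "(1/2::real) ^ N0 < c1 / (4 * c2 * real m)"
    using real_arch_pow_inv[of "c1 / (4 * c2 * real m)" "1/2"] by auto
  define N where "N = max (max N0 1) (nat \<lceil>2 ^ (m + 1) * b\<rceil>)"
  have N1: "1 \<le> N" and NN0: "N0 \<le> N" unfolding N_def by auto
  have Nb: "2 ^ (m + 1) * b \<le> real N" unfolding N_def by linarith
  define e where "e = \<tau> / real N"
  have e0: "0 < e" unfolding e_def using tau N1 by simp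
  have e1: "e \<le> 1"
  proof -
    have "e \<le> \<tau>" unfolding e_def using tau N1 by (simp add: divide_le_eq)
    then show ?thesis using tau1 by simp
  qed
  define K where "K = m * N"
  have K: "1 \<le> real K * e"
  proof -
    have "real K * e = real m * \<tau>" unfolding K_def e_def using N1 by simp
    moreover have "1 \<le> real m * \<tau>" using mt tau by (simp add: divide_le_eq mult.commute)
    ultimately show ?thesis by simp
  qed
  have dleq: "dl A e = exp (e * aa A) - 1" by (rule dl_def[OF blA saA c2 up1 tau N1 e_def e1])
  have dl0: "0 \<le> dl A e" unfolding dleq using e0 aa_nonneg[OF blA] by simp
  have dlb: "dl A e \<le> 1 / 2 ^ (m + 1)"
  proof -
    have "dl A e \<le> e * aa A * exp (e * aa A)"
      unfolding dleq by (rule exp_minus_one_le) (use e0 aa_nonneg[OF blA] in simp)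
    also have "\<dots> \<le> e * aa A * exp (aa A)"
      using e0 e1 aa_nonneg[OF blA] by (intro mult_left_mono) (auto simp: mult_left_le_one_le)
    also have "\<dots> \<le> b / real N"
    proof -
      have "e * aa A * exp (aa A) = \<tau> * (b / real N)" unfolding e_def b_def by simp
      also have "\<dots> \<le> 1 * (b / real N)" using tau tau1 b0 N1 by (intro mult_right_mono) auto
      finally show ?thesis by simp
    qed
    also have "\<dots> \<le> 1 / 2 ^ (m + 1)"
      using Nb N1 by (simp add: divide_le_eq field_simps)
    finally show ?thesis .
  qed
  have dl1: "dl A e \<le> 1"
  proof -
    have "(1::real) \<le> 2 ^ (m + 1)" by (rule one_le_power) simp
    then have "(1::real) / 2 ^ (m + 1) \<le> 1" by simp
    then show ?thesis using dlb by linarith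
  qed
  have Nc: "(1/2::real) ^ N \<le> c1 / (4 * c2 * real m)"
  proof -
    have "(1/2::real) ^ N \<le> (1/2) ^ N0" using NN0 by (intro power_decreasing) auto
    then show ?thesis using N0 by linarith
  qed
  define M where "M = real K * (2 * (real N * real N * 4 ^ K * 4 ^ N))"
  have M0: "0 < M" unfolding M_def K_def using m1 N1 by simp
  show ?thesis
  proof (intro exI[of _ "c1 / (2 * M)"] conjI allI)
    show "0 < c1 / (2 * M)" using c1 M0 by simp
    fix x
    have core: "ennreal (c1 * (norm x)\<^sup>2) \<le> ennreal M * QQ A G 0 \<tau> x
        + ennreal (real K * (2 * (c2 * (4 ^ K * dl A e ^ (2 * N) * (norm x)\<^sup>2))))"
      unfolding M_def by (rule lower_core[OF blA saA c2 up1 tau N1 e_def e1 dl1 K lo1])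
    have rb: "real K * (2 * (c2 * (4 ^ K * dl A e ^ (2 * N) * (norm x)\<^sup>2))) \<le> c1 * (norm x)\<^sup>2 / 2"
      unfolding K_def by (rule param_bound[OF m1 N1 dl0 dlb Nc c1 c2]) simp
    have "ennreal (c1 * (norm x)\<^sup>2 / (2 * M)) \<le> QQ A G 0 \<tau> x"
      by (rule ennreal_lb[OF M0 _ _ rb core]) (use c2 dl0 c1 in auto)
    then show "ennreal (c1 / (2 * M) * (norm x)\<^sup>2) \<le> QQ A G 0 \<tau> x" by simp
  qed
qed

lemma upper_any:
  fixes A :: "'a::{complex_inner,complete_space} \<Rightarrow> 'a" and G :: "'a set"
  assumes blA: "bounded_linear A" and saA: "selfadjoint_op A"
    and c2: "0 < c2"
    and up1: "\<And>y. QQ A G 0 1 y \<le> ennreal (c2 * (norm y)\<^sup>2)"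
    and tau: "0 < \<tau>"
  shows "\<exists>c>0. \<forall>x. QQ A G 0 \<tau> x \<le> ennreal (c * (norm x)\<^sup>2)"
proof -
  define K where "K = nat \<lceil>\<tau>\<rceil>"
  have K1: "1 \<le> K" unfolding K_def using tau by (intro one_le_nat_ceiling)
  have tK: "\<tau> \<le> 0 + real K * 1" unfolding K_def by linarith
  define c where "c = real K * (c2 * (exp (real K * aa A))\<^sup>2)"
  show ?thesis
  proof (intro exI[of _ c] conjI allI)
    show "0 < c" unfolding c_def using K1 c2 by simp
    fix x
    have "QQ A G 0 \<tau> x \<le> (\<Sum>k<K. QQ A G (0 + real k * 1) (0 + real (Suc k) * 1) x)"
      by (rule QQ_split[OF blA saA _ tK]) simp
    also have "\<dots> \<le> (\<Sum>k<K. ennreal (c2 * (exp (real K * aa A))\<^sup>2 * (norm x)\<^sup>2))"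
    proof (rule sum_mono)
      fix k assume "k \<in> {..<K}"
      then have kK: "k \<le> K" by simp
      have "QQ A G (0 + real k * 1) (0 + real (Suc k) * 1) x = QQ A G (real k) (real k + 1) x"
        by (simp add: algebra_simps)
      also have "\<dots> = QQ A G 0 1 (exp_op A (real k) x)" by (rule QQ_shift[OF blA saA])
      also have "\<dots> \<le> ennreal (c2 * (norm (exp_op A (real k) x))\<^sup>2)" by (rule up1)
      also have "\<dots> \<le> ennreal (c2 * (exp (real K * aa A))\<^sup>2 * (norm x)\<^sup>2)"
      proof (rule ennreal_leI)
        have "norm (exp_op A (real k) x) \<le> exp (real k * aa A) * norm x"
          using exp_op_norm[OF blA, of "real k" x] by simp
        also have "\<dots> \<le> exp (real K * aa A) * norm x"
          using kK aa_nonneg[OF blA] by (intro mult_right_mono) (auto intro: mult_right_mono)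
        finally have "(norm (exp_op A (real k) x))\<^sup>2 \<le> (exp (real K * aa A) * norm x)\<^sup>2"
          by (intro power_mono) auto
        then show "c2 * (norm (exp_op A (real k) x))\<^sup>2 \<le> c2 * (exp (real K * aa A))\<^sup>2 * (norm x)\<^sup>2"
          using c2 by (simp add: power_mult_distrib mult.assoc)
      qed
      finally show "QQ A G (0 + real k * 1) (0 + real (Suc k) * 1) x \<le> ennreal (c2 * (exp (real K * aa A))\<^sup>2 * (norm x)\<^sup>2)" .
    qed
    also have "\<dots> = ennreal (c * (norm x)\<^sup>2)"
      unfolding c_def using c2 by (simp add: ennreal_of_nat_eq_real_of_nat ennreal_mult[symmetric] mult.assoc)
    finally show "QQ A G 0 \<tau> x \<le> ennreal (c * (norm x)\<^sup>2)" .
  qed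
qed

theorem theorem3p11:
  fixes A :: "'a::{complex_inner, complete_space} \<Rightarrow> 'a" and G :: "'a set"
  assumes "separable_type TYPE('a)"
    and "bounded_clinear_op A"
    and "selfadjoint_op A"
    and "countable G"
  shows "semicont_frame A G 1 \<longleftrightarrow> (\<forall>\<tau>>0. semicont_frame A G \<tau>)"
proof
  assume "\<forall>\<tau>>0. semicont_frame A G \<tau>"
  then show "semicont_frame A G 1" by simp
next
  have blA: "bounded_linear A" using assms(2) by (simp add: bounded_clinear_op_def)
  have saA: "selfadjoint_op A" by (rule assms(3))
  assume "semicont_frame A G 1"
  then obtain c1 c2 where c1: "0 < c1" and c2: "0 < c2"
    and lo1: "\<And>y. ennreal (c1 * (norm y)\<^sup>2) \<le> QQ A G 0 1 y"
    and up1: "\<And>y. QQ A G 0 1 y \<le> ennreal (c2 * (norm y)\<^sup>2)"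
    unfolding semicont_frame_def frame_sum_QQ by blast
  show "\<forall>\<tau>>0. semicont_frame A G \<tau>"
  proof (intro allI impI)
    fix \<tau> :: real assume tau: "0 < \<tau>"
    obtain cu where cu: "0 < cu" "\<And>x. QQ A G 0 \<tau> x \<le> ennreal (cu * (norm x)\<^sup>2)"
      using upper_any[OF blA saA c2 up1 tau] by blast
    obtain cl where cl: "0 < cl" "\<And>x. ennreal (cl * (norm x)\<^sup>2) \<le> QQ A G 0 \<tau> x"
    proof (cases "1 \<le> \<tau>")
      case True
      have "ennreal (c1 * (norm x)\<^sup>2) \<le> QQ A G 0 \<tau> x" for x
        using lo1[of x] QQ_mono_int[OF blA saA, of 0 0 1 \<tau> G x] True by (meson order.trans order_refl)
      then show ?thesis using that c1 by blast
    next
      case False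
      then show ?thesis using that lower_small[OF blA saA c1 c2 lo1 up1 tau] by force
    qed
    show "semicont_frame A G \<tau>"
      unfolding semicont_frame_def frame_sum_QQ using cu cl by blast
  qed
qed


end
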